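(* There are no proper triharmonic curves with constant curvature immersed in the product space $\mathbb{H}^2(4a)\times\mathbb{R}$ ($a<0$).
   Context: $\mathbb{H}^2(4a)\times\mathbb{R}$ is the Riemannian product of the hyperbolic plane of constant curvature $4a<0$ with the real line; equivalently the BCV space $M(a,0)$, i.e. $\{(x,y,z):1+a(x^2+y^2)>0\}$ with metric $\frac{dx^2+dy^2}{[1+a(x^2+y^2)]^2}+dz^2$. An arc-length parametrized curve $\gamma$ with $T=\gamma'$ is triharmonic if $\nabla_T^5T+R(\nabla_T^3T,T)T-R(\nabla_T^2T,\nabla_TT)T=0$, where $\nabla$ is the Levi-Civita connection and $R(X,Y)=\nabla_X\nabla_Y-\nabla_Y\nabla_X-\nabla_{[X,Y]}$; it is proper if it is not a geodesic. The curvature is $\kappa=\lVert\nabla_TT\rVert$. *)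

theory Defs
  imports "HOL-Analysis.Analysis"
begin

text \<open>Riemannian geometry in a global coordinate chart of an open subset of R^n.
  A metric is given by its coefficient matrix G p (entries g_ij(p)).\<close>

definition pdiff :: "(real^'n \<Rightarrow> real) \<Rightarrow> real^'n \<Rightarrow> 'n \<Rightarrow> real" where
  "pdiff f p i = deriv (\<lambda>s. f (p + s *\<^sub>R axis i 1)) 0"

definition christoffel :: "(real^'n \<Rightarrow> real^'n^'n) \<Rightarrow> real^'n \<Rightarrow> 'n \<Rightarrow> 'n \<Rightarrow> 'n \<Rightarrow> real" where
  "christoffel G p k i j = (1/2) * (\<Sum>l\<in>UNIV. matrix_inv (G p) $ k $ l *
      (pdiff (\<lambda>q. G q $ j $ l) p i + pdiff (\<lambda>q. G q $ i $ l) p j - pdiff (\<lambda>q. G q $ i $ j) p l))"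

text \<open>Components R^l_ijk with R(d_i,d_j)d_k = R^l_ijk d_l, for the convention
  R(X,Y) = nabla_X nabla_Y - nabla_Y nabla_X - nabla_[X,Y].\<close>
definition curv_coeff :: "(real^'n \<Rightarrow> real^'n^'n) \<Rightarrow> real^'n \<Rightarrow> 'n \<Rightarrow> 'n \<Rightarrow> 'n \<Rightarrow> 'n \<Rightarrow> real" where
  "curv_coeff G p l i j k =
     pdiff (\<lambda>q. christoffel G q l j k) p i - pdiff (\<lambda>q. christoffel G q l i k) p j
     + (\<Sum>m\<in>UNIV. christoffel G p l i m * christoffel G p m j k
                  - christoffel G p l j m * christoffel G p m i k)"

definition riem :: "(real^'n \<Rightarrow> real^'n^'n) \<Rightarrow> real^'n \<Rightarrow> real^'n \<Rightarrow> real^'n \<Rightarrow> real^'n \<Rightarrow> real^'n" where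
  "riem G p X Y Z = (\<chi> l. \<Sum>i\<in>UNIV. \<Sum>j\<in>UNIV. \<Sum>k\<in>UNIV.
       X $ i * Y $ j * Z $ k * curv_coeff G p l i j k)"

definition ginner :: "(real^'n \<Rightarrow> real^'n^'n) \<Rightarrow> real^'n \<Rightarrow> real^'n \<Rightarrow> real^'n \<Rightarrow> real" where
  "ginner G p u v = (\<Sum>i\<in>UNIV. \<Sum>j\<in>UNIV. G p $ i $ j * u $ i * v $ j)"

definition gnorm :: "(real^'n \<Rightarrow> real^'n^'n) \<Rightarrow> real^'n \<Rightarrow> real^'n \<Rightarrow> real" where
  "gnorm G p u = sqrt (ginner G p u u)"

definition vel :: "(real \<Rightarrow> real^'n) \<Rightarrow> real \<Rightarrow> real^'n" where
  "vel \<gamma> t = (\<chi> k. deriv (\<lambda>s. \<gamma> s $ k) t)"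

definition covd :: "(real^'n \<Rightarrow> real^'n^'n) \<Rightarrow> (real \<Rightarrow> real^'n) \<Rightarrow> (real \<Rightarrow> real^'n) \<Rightarrow> real \<Rightarrow> real^'n" where
  "covd G \<gamma> V t = (\<chi> k. deriv (\<lambda>s. V s $ k) t
       + (\<Sum>i\<in>UNIV. \<Sum>j\<in>UNIV. christoffel G (\<gamma> t) k i j * vel \<gamma> t $ i * V t $ j))"

definition covd_pow :: "(real^'n \<Rightarrow> real^'n^'n) \<Rightarrow> (real \<Rightarrow> real^'n) \<Rightarrow> nat \<Rightarrow> real \<Rightarrow> real^'n" where
  "covd_pow G \<gamma> n = (covd G \<gamma> ^^ n) (vel \<gamma>)"

definition smooth_curve_on :: "(real \<Rightarrow> real^'n) \<Rightarrow> real set \<Rightarrow> bool" where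
  "smooth_curve_on \<gamma> I \<longleftrightarrow> (\<forall>k n. \<forall>t\<in>I. ((deriv ^^ n) (\<lambda>s. \<gamma> s $ k)) differentiable (at t))"

definition arclength_param :: "(real^'n \<Rightarrow> real^'n^'n) \<Rightarrow> (real \<Rightarrow> real^'n) \<Rightarrow> real set \<Rightarrow> bool" where
  "arclength_param G \<gamma> I \<longleftrightarrow> (\<forall>t\<in>I. gnorm G (\<gamma> t) (vel \<gamma> t) = 1)"

definition triharmonic :: "(real^'n \<Rightarrow> real^'n^'n) \<Rightarrow> (real \<Rightarrow> real^'n) \<Rightarrow> real set \<Rightarrow> bool" where
  "triharmonic G \<gamma> I \<longleftrightarrow> (\<forall>t\<in>I.
      covd_pow G \<gamma> 5 t + riem G (\<gamma> t) (covd_pow G \<gamma> 3 t) (vel \<gamma> t) (vel \<gamma> t)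
      - riem G (\<gamma> t) (covd_pow G \<gamma> 2 t) (covd_pow G \<gamma> 1 t) (vel \<gamma> t) = 0)"

definition curvature :: "(real^'n \<Rightarrow> real^'n^'n) \<Rightarrow> (real \<Rightarrow> real^'n) \<Rightarrow> real \<Rightarrow> real" where
  "curvature G \<gamma> t = gnorm G (\<gamma> t) (covd_pow G \<gamma> 1 t)"

definition geodesic_on :: "(real^'n \<Rightarrow> real^'n^'n) \<Rightarrow> (real \<Rightarrow> real^'n) \<Rightarrow> real set \<Rightarrow> bool" where
  "geodesic_on G \<gamma> I \<longleftrightarrow> (\<forall>t\<in>I. covd_pow G \<gamma> 1 t = 0)"

text \<open>The BCV space M(a,0) = H^2(4a) x R (for a < 0): domain and metric
  (dx^2+dy^2)/[1+a(x^2+y^2)]^2 + dz^2, with coordinates x = p$1, y = p$2, z = p$3.\<close>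
definition bcv_domain :: "real \<Rightarrow> (real^3) set" where
  "bcv_domain a = {p. 1 + a * ((p $ 1)\<^sup>2 + (p $ 2)\<^sup>2) > 0}"

definition bcv_metric :: "real \<Rightarrow> real^3 \<Rightarrow> real^3^3" where
  "bcv_metric a p = (\<chi> i j. if i \<noteq> j then 0
       else if i = 3 then 1 else 1 / (1 + a * ((p $ 1)\<^sup>2 + (p $ 2)\<^sup>2))\<^sup>2)"

end

theory Submission
  imports Defs
begin

lemma "(1::3) \<noteq> 2 \<and> (1::3) \<noteq> 3 \<and> (2::3) \<noteq> 3" by simp

definition Dp :: "real \<Rightarrow> real^3 \<Rightarrow> real" where
  "Dp a p = 1 + a * ((p $ 1)\<^sup>2 + (p $ 2)\<^sup>2)"

definition ec :: "real^3 \<Rightarrow> 3 \<Rightarrow> real" where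
  "ec p m = (if m = 3 then 0 else p $ m)"

lemma axis_comp: "(p + s *\<^sub>R axis i 1) $ m = p $ m + s * (if m = i then 1 else 0)"
  by (simp add: axis_def)

lemma ec_lin: "ec (p + s *\<^sub>R v) m = ec p m + s * ec v m"
  by (simp add: ec_def)

lemma Dp_deriv:
  "((\<lambda>s. Dp a (p + s *\<^sub>R axis i 1)) has_real_derivative 2 * a * ec p i) (at 0)"
proof -
  have e: "(\<lambda>s. Dp a (p + s *\<^sub>R axis i 1)) = (\<lambda>s. 1 + a * ((p$1 + s * (if 1 = i then 1 else 0))\<^sup>2 + (p$2 + s * (if 2 = i then 1 else 0))\<^sup>2))"
    by (simp only: Dp_def axis_comp)
  show ?thesis unfolding e
    apply (rule derivative_eq_intros refl)+
    using exhaust_3[of i] by (auto simp: ec_def)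
qed


lemma deriv_eqI: "(f has_real_derivative X) F \<Longrightarrow> X = Y \<Longrightarrow> (f has_real_derivative Y) F"
  by simp

lemma Dp_deriv_eq: "d = 2 * a * ec p i \<Longrightarrow> ((\<lambda>s. Dp a (p + s *\<^sub>R axis i 1)) has_real_derivative d) (at 0)"
  using Dp_deriv by simp

lemma pdiff_eq: "((\<lambda>s. f (p + s *\<^sub>R axis i 1)) has_real_derivative d) (at 0) \<Longrightarrow> pdiff f p i = d"
  by (simp add: pdiff_def DERIV_imp_deriv)

lemma bcv_metric_alt: "bcv_metric a p = (\<chi> i j. if i \<noteq> j then 0 else if i = 3 then 1 else 1 / (Dp a p)\<^sup>2)"
  unfolding bcv_metric_def Dp_def by simp

lemma bcv_entry: "bcv_metric a p $ j $ l = (if j \<noteq> l then 0 else if j = 3 then 1 else 1 / (Dp a p)\<^sup>2)"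
  by (simp add: bcv_metric_alt)

lemma pdiff_g:
  assumes "Dp a p \<noteq> 0"
  shows "pdiff (\<lambda>q. bcv_metric a q $ j $ l) p i = (if j = l \<and> j \<noteq> 3 then -4*a*ec p i / (Dp a p)^3 else 0)"
proof (cases "j = l \<and> j \<noteq> 3")
  case True
  have "((\<lambda>s. 1 / (Dp a (p + s *\<^sub>R axis i 1))\<^sup>2) has_real_derivative -4*a*ec p i / (Dp a p)^3) (at 0)"
    apply (rule derivative_eq_intros Dp_deriv refl)+
    using assms by (auto simp: field_simps power2_eq_square power3_eq_cube)
  then show ?thesis using True by (simp add: bcv_entry pdiff_eq)
next
  case False
  then have "(\<lambda>q. bcv_metric a q $ j $ l) = (\<lambda>q. if j \<noteq> l then 0 else 1)"
    by (auto simp: bcv_entry)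
  then have "pdiff (\<lambda>q. bcv_metric a q $ j $ l) p i = 0" by (simp add: pdiff_def)
  then show ?thesis using False by auto
qed

lemma matrix_inv_eq:
  fixes A B :: "real^'n^'n"
  assumes "A ** B = mat 1" "B ** A = mat 1"
  shows "matrix_inv A = B"
proof -
  have ex: "\<exists>A'. A ** A' = mat 1 \<and> A' ** A = mat 1" using assms by blast
  define C where "C = matrix_inv A"
  have C: "A ** C = mat 1 \<and> C ** A = mat 1"
    unfolding C_def matrix_inv_def by (rule someI_ex[OF ex])
  have "C = C ** (A ** B)" using assms by (simp add: matrix_mul_rid)
  also have "\<dots> = (C ** A) ** B" by (simp add: matrix_mul_assoc)
  also have "\<dots> = B" using C by (simp add: matrix_mul_lid)
  finally show ?thesis by (simp add: C_def)
qed

lemma minv: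
  assumes "Dp a p \<noteq> 0"
  shows "matrix_inv (bcv_metric a p) = (\<chi> i j. if i \<noteq> j then 0 else if i = 3 then 1 else (Dp a p)\<^sup>2)"
  apply (rule matrix_inv_eq)
  using assms
   apply (simp_all add: bcv_metric_alt matrix_matrix_mult_def mat_def vec_eq_iff sum_3)
  by (auto simp: forall_3)

definition Lf :: "real^3 \<Rightarrow> 3 \<Rightarrow> 3 \<Rightarrow> 3 \<Rightarrow> real" where
  "Lf p k i j = (if k = 3 then 0 else (if j = k then ec p i else 0) + (if i = k then ec p j else 0)
      - (if i = j \<and> i \<noteq> 3 then ec p k else 0))"

definition Gam :: "real \<Rightarrow> real^3 \<Rightarrow> 3 \<Rightarrow> 3 \<Rightarrow> 3 \<Rightarrow> real" where
  "Gam a p k i j = -2 * a / Dp a p * Lf p k i j"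

lemma christ:
  assumes "Dp a p \<noteq> 0"
  shows "christoffel (bcv_metric a) p k i j = Gam a p k i j"
  using assms
  apply (simp add: christoffel_def minv pdiff_g sum_3 Gam_def Lf_def)
  using exhaust_3[of k] exhaust_3[of i] exhaust_3[of j]
  by (auto simp: ec_def field_simps power2_eq_square power3_eq_cube)


lemma Lf_lin: "Lf (p + s *\<^sub>R v) k i j = Lf p k i j + s * Lf v k i j"
  by (simp add: Lf_def ec_lin algebra_simps)

definition dGam :: "real \<Rightarrow> real^3 \<Rightarrow> 3 \<Rightarrow> 3 \<Rightarrow> 3 \<Rightarrow> 3 \<Rightarrow> real" where
  "dGam a p l j k i = -2 * a * (Lf (axis i 1) l j k * Dp a p - Lf p l j k * (2 * a * ec p i)) / (Dp a p)\<^sup>2"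

lemma Dp_cont: "continuous_on UNIV (\<lambda>s. Dp a (p + s *\<^sub>R v))"
  unfolding Dp_def by (intro continuous_intros)

lemma pdiff_christ:
  assumes "Dp a p > 0"
  shows "pdiff (\<lambda>q. christoffel (bcv_metric a) q l j k) p i = dGam a p l j k i"
proof -
  let ?S = "{s. 0 < Dp a (p + s *\<^sub>R axis i 1)}"
  have op: "open ?S" by (rule open_Collect_less) (auto intro: Dp_cont continuous_intros)
  have z: "(0::real) \<in> ?S" using assms by simp
  have d1: "((\<lambda>s. -2 * a / Dp a (p + s *\<^sub>R axis i 1)) has_real_derivative
      (0 * Dp a p - (-2 * a) * (2 * a * ec p i)) / (Dp a p * Dp a p)) (at 0)"
    by (rule deriv_eqI[OF DERIV_divide[OF DERIV_const Dp_deriv]]) (use assms in simp_all)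
  have d2: "((\<lambda>s. Lf p l j k + s * Lf (axis i 1) l j k) has_real_derivative Lf (axis i 1) l j k) (at 0)"
    by (rule derivative_eq_intros refl)+ simp
  have d: "((\<lambda>s. -2 * a / Dp a (p + s *\<^sub>R axis i 1) * (Lf p l j k + s * Lf (axis i 1) l j k))
     has_real_derivative dGam a p l j k i) (at 0)"
    using DERIV_mult[OF d1 d2] assms unfolding dGam_def
    by (simp add: field_simps power2_eq_square)
  have "((\<lambda>s. christoffel (bcv_metric a) (p + s *\<^sub>R axis i 1) l j k) has_real_derivative dGam a p l j k i) (at 0)"
    apply (rule has_field_derivative_transform_within_open[OF d op z])
    by (simp add: christ Gam_def Lf_lin)
  then show ?thesis by (rule pdiff_eq)
qed

definition gh :: "real \<Rightarrow> real^3 \<Rightarrow> 3 \<Rightarrow> 3 \<Rightarrow> real" where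
  "gh a p j k = (if j = k \<and> j \<noteq> 3 then 1 / (Dp a p)\<^sup>2 else 0)"
definition dh :: "3 \<Rightarrow> 3 \<Rightarrow> real" where
  "dh l i = (if l = i \<and> l \<noteq> 3 then 1 else 0)"

lemma curv:
  assumes "Dp a p > 0"
  shows "curv_coeff (bcv_metric a) p l i j k = 4 * a * (gh a p j k * dh l i - gh a p i k * dh l j)"
proof -
  have D: "Dp a p \<noteq> 0" using assms by simp
  show ?thesis
  using assms
  apply (simp add: curv_coeff_def pdiff_christ christ D sum_3 Gam_def dGam_def)
  using exhaust_3[of l] exhaust_3[of i] exhaust_3[of j] exhaust_3[of k]
  apply (elim disjE)
  apply (simp_all add: Lf_def ec_def gh_def dh_def axis_def)
  apply (simp_all add: D field_simps power2_eq_square)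
  apply (unfold Dp_def power2_eq_square)
  apply (simp_all add: algebra_simps)
  done
qed


definition hh :: "real \<Rightarrow> real^3 \<Rightarrow> real^3 \<Rightarrow> real^3 \<Rightarrow> real" where
  "hh a p u v = (u$1 * v$1 + u$2 * v$2) / (Dp a p)\<^sup>2"

lemma ginner_bcv: "ginner (bcv_metric a) p u v = hh a p u v + u$3 * v$3"
  by (simp add: ginner_def hh_def sum_3 bcv_entry add_divide_distrib)

lemma riem_bcv:
  assumes "Dp a p > 0"
  shows "riem (bcv_metric a) p X Y Z = (\<chi> l. if l = 3 then 0 else 4 * a * (X$l * hh a p Y Z - Y$l * hh a p X Z))"
  unfolding vec_eq_iff
proof
  fix l :: 3
  show "riem (bcv_metric a) p X Y Z $ l = (\<chi> l. if l = 3 then 0 else 4 * a * (X$l * hh a p Y Z - Y$l * hh a p X Z)) $ l"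
    using exhaust_3[of l] assms
    by (auto simp: riem_def curv sum_3 gh_def dh_def hh_def field_simps)
qed

lemma riem3: "Dp a p > 0 \<Longrightarrow> riem (bcv_metric a) p X Y Z $ 3 = 0"
  by (simp add: riem_bcv)

lemma ginner_riem:
  assumes "Dp a p > 0"
  shows "ginner (bcv_metric a) p (riem (bcv_metric a) p X Y Z) W = 4 * a * (hh a p X W * hh a p Y Z - hh a p Y W * hh a p X Z)"
  using assms by (simp add: ginner_bcv riem_bcv hh_def field_simps)

inductive_set Alg :: "real \<Rightarrow> (real \<Rightarrow> real^3) \<Rightarrow> real set \<Rightarrow> (real \<Rightarrow> real) set"
  for a :: real and \<gamma> :: "real \<Rightarrow> real^3" and I :: "real set" where
  Alg_const: "(\<lambda>s. c) \<in> Alg a \<gamma> I"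
| Alg_coord: "(deriv ^^ n) (\<lambda>s. \<gamma> s $ k) \<in> Alg a \<gamma> I"
| Alg_invD: "(\<lambda>s. 1 / Dp a (\<gamma> s)) \<in> Alg a \<gamma> I"
| Alg_add: "f \<in> Alg a \<gamma> I \<Longrightarrow> g \<in> Alg a \<gamma> I \<Longrightarrow> (\<lambda>s. f s + g s) \<in> Alg a \<gamma> I"
| Alg_mult: "f \<in> Alg a \<gamma> I \<Longrightarrow> g \<in> Alg a \<gamma> I \<Longrightarrow> (\<lambda>s. f s * g s) \<in> Alg a \<gamma> I"
| Alg_cong: "g \<in> Alg a \<gamma> I \<Longrightarrow> (\<forall>t\<in>I. f t = g t) \<Longrightarrow> f \<in> Alg a \<gamma> I"

lemma Alg_g0: "(\<lambda>s. \<gamma> s $ k) \<in> Alg a \<gamma> I"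
  using Alg_coord[of 0 \<gamma> k a I] by simp

lemma Alg_g1: "deriv (\<lambda>s. \<gamma> s $ k) \<in> Alg a \<gamma> I"
  using Alg_coord[of 1 \<gamma> k a I] by simp

lemma Alg_minus: "f \<in> Alg a \<gamma> I \<Longrightarrow> g \<in> Alg a \<gamma> I \<Longrightarrow> (\<lambda>s. f s - g s) \<in> Alg a \<gamma> I"
proof -
  assume f: "f \<in> Alg a \<gamma> I" and g: "g \<in> Alg a \<gamma> I"
  have "(\<lambda>s. f s + (-1) * g s) \<in> Alg a \<gamma> I"
    by (intro Alg_add f Alg_mult Alg_const g)
  then show ?thesis by (rule Alg_cong) simp
qed

lemma Alg_sum: "finite A \<Longrightarrow> (\<And>i. i \<in> A \<Longrightarrow> F i \<in> Alg a \<gamma> I) \<Longrightarrow> (\<lambda>s. \<Sum>i\<in>A. F i s) \<in> Alg a \<gamma> I"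
proof (induction A rule: finite_induct)
  case empty
  then show ?case using Alg_const[of 0] by simp
next
  case (insert x F)
  then show ?case by (simp add: Alg_add)
qed

lemma Alg_invD_der: "(\<lambda>s. (-2 * a) * ((\<gamma> s $ 1 * deriv (\<lambda>s. \<gamma> s $ 1) s) + (\<gamma> s $ 2 * deriv (\<lambda>s. \<gamma> s $ 2) s))
              * ((1 / Dp a (\<gamma> s)) * (1 / Dp a (\<gamma> s)))) \<in> Alg a \<gamma> I"
proof -
  have 1: "(\<lambda>s. \<gamma> s $ 1 * deriv (\<lambda>s. \<gamma> s $ 1) s) \<in> Alg a \<gamma> I"
    by (rule Alg_mult[OF Alg_g0 Alg_g1])
  have 2: "(\<lambda>s. \<gamma> s $ 2 * deriv (\<lambda>s. \<gamma> s $ 2) s) \<in> Alg a \<gamma> I"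
    by (rule Alg_mult[OF Alg_g0 Alg_g1])
  have 3: "(\<lambda>s. (-2 * a) * ((\<gamma> s $ 1 * deriv (\<lambda>s. \<gamma> s $ 1) s) + (\<gamma> s $ 2 * deriv (\<lambda>s. \<gamma> s $ 2) s))) \<in> Alg a \<gamma> I"
    by (rule Alg_mult[OF Alg_const Alg_add[OF 1 2]])
  have 4: "(\<lambda>s. (1 / Dp a (\<gamma> s)) * (1 / Dp a (\<gamma> s))) \<in> Alg a \<gamma> I"
    by (rule Alg_mult[OF Alg_invD Alg_invD])
  show ?thesis by (rule Alg_mult[OF 3 4])
qed

locale curvctx =
  fixes a :: real and \<gamma> :: "real \<Rightarrow> real^3" and I :: "real set"
  assumes opI: "open I" and sm: "smooth_curve_on \<gamma> I" and Dpos: "\<forall>t\<in>I. Dp a (\<gamma> t) > 0"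
begin

lemma g_deriv: "t \<in> I \<Longrightarrow> ((\<lambda>s. \<gamma> s $ k) has_real_derivative deriv (\<lambda>s. \<gamma> s $ k) t) (at t)"
  using sm unfolding smooth_curve_on_def
  by (metis DERIV_deriv_iff_real_differentiable funpow_0)

lemma Alg_deriv: "h \<in> Alg a \<gamma> I \<Longrightarrow> \<exists>h'\<in>Alg a \<gamma> I. \<forall>t\<in>I. (h has_real_derivative h' t) (at t)"
proof (induction h rule: Alg.induct)
  case (Alg_const c)
  then show ?case by (intro bexI[of _ "\<lambda>s. 0"] Alg.Alg_const) auto
next
  case (Alg_coord n k)
  show ?case
  proof (intro bexI[of _ "(deriv ^^ Suc n) (\<lambda>s. \<gamma> s $ k)"] ballI)
    fix t assume "t \<in> I"
    then show "((deriv ^^ n) (\<lambda>s. \<gamma> s $ k) has_real_derivative (deriv ^^ Suc n) (\<lambda>s. \<gamma> s $ k) t) (at t)"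
      using sm unfolding smooth_curve_on_def
      by (simp add: DERIV_deriv_iff_real_differentiable)
  qed (rule Alg.Alg_coord)
next
  case Alg_invD
  let ?h = "\<lambda>s. (-2 * a) * ((\<gamma> s $ 1 * deriv (\<lambda>s. \<gamma> s $ 1) s) + (\<gamma> s $ 2 * deriv (\<lambda>s. \<gamma> s $ 2) s))
              * ((1 / Dp a (\<gamma> s)) * (1 / Dp a (\<gamma> s)))"
  show ?case
  proof (intro bexI[of _ ?h] ballI)
    fix t assume t: "t \<in> I"
    show "((\<lambda>s. 1 / Dp a (\<gamma> s)) has_real_derivative ?h t) (at t)"
      unfolding Dp_def
      apply (rule derivative_eq_intros g_deriv[OF t] refl)+
      using Dpos t by (auto simp: Dp_def field_simps power2_eq_square)
  next
    show "?h \<in> Alg a \<gamma> I"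
      by (rule Alg_invD_der)
  qed
next
  case (Alg_add f g)
  then obtain f' g' where f': "f' \<in> Alg a \<gamma> I" "\<forall>t\<in>I. (f has_real_derivative f' t) (at t)"
    and g': "g' \<in> Alg a \<gamma> I" "\<forall>t\<in>I. (g has_real_derivative g' t) (at t)" by blast
  show ?case
  proof (intro bexI[of _ "\<lambda>s. f' s + g' s"] ballI)
    fix t assume t: "t \<in> I"
    show "((\<lambda>s. f s + g s) has_real_derivative f' t + g' t) (at t)"
      using DERIV_add[OF f'(2)[rule_format, OF t] g'(2)[rule_format, OF t]] by (simp add: mult.commute)
  qed (rule Alg.Alg_add[OF f'(1) g'(1)])
next
  case (Alg_mult f g)
  then obtain f' g' where f': "f' \<in> Alg a \<gamma> I" "\<forall>t\<in>I. (f has_real_derivative f' t) (at t)"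
    and g': "g' \<in> Alg a \<gamma> I" "\<forall>t\<in>I. (g has_real_derivative g' t) (at t)" by blast
  show ?case
  proof (intro bexI[of _ "\<lambda>s. f' s * g s + f s * g' s"] ballI)
    fix t assume t: "t \<in> I"
    show "((\<lambda>s. f s * g s) has_real_derivative f' t * g t + f t * g' t) (at t)"
      using DERIV_mult[OF f'(2)[rule_format, OF t] g'(2)[rule_format, OF t]] by (simp add: mult.commute)
  next
    show "(\<lambda>s. f' s * g s + f s * g' s) \<in> Alg a \<gamma> I"
    proof -
      have fA: "f \<in> Alg a \<gamma> I" and gA: "g \<in> Alg a \<gamma> I" using Alg_mult.hyps by auto
      show ?thesis by (rule Alg.Alg_add[OF Alg.Alg_mult[OF f'(1) gA] Alg.Alg_mult[OF fA g'(1)]])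
    qed
  qed
next
  case (Alg_cong g f)
  then obtain g' where g': "g' \<in> Alg a \<gamma> I" "\<forall>t\<in>I. (g has_real_derivative g' t) (at t)" by blast
  show ?case
  proof (intro bexI[of _ g'] ballI g')
    fix t assume t: "t \<in> I"
    show "(f has_real_derivative g' t) (at t)"
      by (rule has_field_derivative_transform_within_open[OF g'(2)[rule_format, OF t] opI t])
         (use Alg_cong.hyps in simp)
  qed
qed

lemma Alg_has_deriv: "h \<in> Alg a \<gamma> I \<Longrightarrow> t \<in> I \<Longrightarrow> (h has_real_derivative deriv h t) (at t)"
proof -
  assume h: "h \<in> Alg a \<gamma> I" and t: "t \<in> I"
  then obtain h' where "\<forall>t\<in>I. (h has_real_derivative h' t) (at t)" using Alg_deriv by blast
  then have d: "(h has_real_derivative h' t) (at t)" using t by blast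
  then have "deriv h t = h' t" by (rule DERIV_imp_deriv)
  with d show ?thesis by simp
qed

lemma Alg_deriv_mem: "h \<in> Alg a \<gamma> I \<Longrightarrow> deriv h \<in> Alg a \<gamma> I"
proof -
  assume h: "h \<in> Alg a \<gamma> I"
  then obtain h' where "h' \<in> Alg a \<gamma> I" "\<forall>t\<in>I. (h has_real_derivative h' t) (at t)"
    using Alg_deriv by blast
  then have "\<forall>t\<in>I. deriv h t = h' t" by (simp add: DERIV_imp_deriv)
  then show ?thesis using Alg_cong[of h'] \<open>h' \<in> Alg a \<gamma> I\<close> by blast
qed

lemma christ_pos: "Dp a p > 0 \<Longrightarrow> christoffel (bcv_metric a) p k i j = Gam a p k i j"
  by (simp add: christ)

lemma ec_Alg: "(\<lambda>s. ec (\<gamma> s) m) \<in> Alg a \<gamma> I"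
proof (cases "m = 3")
  case True
  then show ?thesis using Alg_const[of 0 a \<gamma> I] by (simp add: ec_def)
next
  case False
  then show ?thesis using Alg_g0[of \<gamma> m a I] by (simp add: ec_def)
qed

lemma Lf_alt: "Lf q k i j = (if k = 3 then 0 else 1) * ((if j = k then 1 else 0) * ec q i
    + (if i = k then 1 else 0) * ec q j + (if i = j \<and> i \<noteq> 3 then -1 else 0) * ec q k)"
  by (auto simp: Lf_def)

lemma Lf_Alg: "(\<lambda>s. Lf (\<gamma> s) k i j) \<in> Alg a \<gamma> I"
  unfolding Lf_alt
  by (rule Alg.Alg_mult[OF Alg_const Alg.Alg_add[OF Alg.Alg_add[OF Alg.Alg_mult[OF Alg_const ec_Alg]
      Alg.Alg_mult[OF Alg_const ec_Alg]] Alg.Alg_mult[OF Alg_const ec_Alg]]])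

lemma vel_Alg: "(\<lambda>s. vel \<gamma> s $ i) \<in> Alg a \<gamma> I"
  using Alg_g1[of \<gamma> i a I] by (simp add: vel_def)

lemma christ_Alg: "(\<lambda>s. christoffel (bcv_metric a) (\<gamma> s) k i j) \<in> Alg a \<gamma> I"
proof (rule Alg_cong)
  show "(\<lambda>s. (-2 * a) * (1 / Dp a (\<gamma> s)) * Lf (\<gamma> s) k i j) \<in> Alg a \<gamma> I"
    by (rule Alg.Alg_mult[OF Alg.Alg_mult[OF Alg_const Alg_invD] Lf_Alg])
  show "\<forall>t\<in>I. christoffel (bcv_metric a) (\<gamma> t) k i j = (-2 * a) * (1 / Dp a (\<gamma> t)) * Lf (\<gamma> t) k i j"
    using Dpos by (simp add: christ_pos Gam_def)
qed

lemma covd_Alg: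
  assumes "\<And>k. (\<lambda>s. V s $ k) \<in> Alg a \<gamma> I"
  shows "(\<lambda>s. covd (bcv_metric a) \<gamma> V s $ k) \<in> Alg a \<gamma> I"
proof -
  have "(\<lambda>s. deriv (\<lambda>s. V s $ k) s + (\<Sum>i\<in>UNIV. \<Sum>j\<in>UNIV. christoffel (bcv_metric a) (\<gamma> s) k i j * vel \<gamma> s $ i * V s $ j)) \<in> Alg a \<gamma> I"
    by (intro Alg.Alg_add Alg_deriv_mem assms Alg_sum finite_UNIV Alg.Alg_mult christ_Alg vel_Alg) simp_all
  then show ?thesis by (simp add: covd_def)
qed

lemma covd_pow_Suc: "covd_pow G \<gamma> (Suc n) = covd G \<gamma> (covd_pow G \<gamma> n)"
  by (simp add: covd_pow_def)

lemma covd_pow_Alg: "(\<lambda>s. covd_pow (bcv_metric a) \<gamma> n s $ k) \<in> Alg a \<gamma> I"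
proof (induction n arbitrary: k)
  case 0
  then show ?case by (simp add: covd_pow_def vel_Alg)
next
  case (Suc n)
  then show ?case unfolding covd_pow_Suc by (rule covd_Alg)
qed

lemma Dp_curve_deriv:
  assumes "t \<in> I" "d = 2 * a * (\<gamma> t $ 1 * deriv (\<lambda>s. \<gamma> s $ 1) t + \<gamma> t $ 2 * deriv (\<lambda>s. \<gamma> s $ 2) t)"
  shows "((\<lambda>s. Dp a (\<gamma> s)) has_real_derivative d) (at t)"
  unfolding Dp_def assms(2)
  apply (rule derivative_eq_intros g_deriv[OF assms(1)] refl)+
  by (simp add: algebra_simps)

lemma covd3: "t \<in> I \<Longrightarrow> covd (bcv_metric a) \<gamma> V t $ 3 = deriv (\<lambda>s. V s $ 3) t"
  using Dpos by (simp add: covd_def christ_pos Gam_def Lf_def)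

lemma ginner_deriv:
  assumes t: "t \<in> I"
    and U: "\<And>k. (\<lambda>s. U s $ k) \<in> Alg a \<gamma> I" and V: "\<And>k. (\<lambda>s. V s $ k) \<in> Alg a \<gamma> I"
  shows "((\<lambda>s. ginner (bcv_metric a) (\<gamma> s) (U s) (V s)) has_real_derivative
     ginner (bcv_metric a) (\<gamma> t) (covd (bcv_metric a) \<gamma> U t) (V t) + ginner (bcv_metric a) (\<gamma> t) (U t) (covd (bcv_metric a) \<gamma> V t)) (at t)"
proof -
  have D: "Dp a (\<gamma> t) \<noteq> 0" using Dpos t by force
  define e where "e = 1 / Dp a (\<gamma> t)"
  have dU: "\<And>k. ((\<lambda>s. U s $ k) has_real_derivative deriv (\<lambda>s. U s $ k) t) (at t)"
    using Alg_has_deriv[OF U t] .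
  have dV: "\<And>k. ((\<lambda>s. V s $ k) has_real_derivative deriv (\<lambda>s. V s $ k) t) (at t)"
    using Alg_has_deriv[OF V t] .
  let ?D' = "2 * a * (\<gamma> t $ 1 * deriv (\<lambda>s. \<gamma> s $ 1) t + \<gamma> t $ 2 * deriv (\<lambda>s. \<gamma> s $ 2) t)"
  have d1: "((\<lambda>s. U s $ 1 * V s $ 1 + U s $ 2 * V s $ 2) has_real_derivative
     (deriv (\<lambda>s. U s $ 1) t * V t $ 1 + U t $ 1 * deriv (\<lambda>s. V s $ 1) t)
     + (deriv (\<lambda>s. U s $ 2) t * V t $ 2 + U t $ 2 * deriv (\<lambda>s. V s $ 2) t)) (at t)"
    using DERIV_add[OF DERIV_mult[OF dU[of 1] dV[of 1]] DERIV_mult[OF dU[of 2] dV[of 2]]] by (simp add: mult.commute)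
  have dinv: "((\<lambda>s. 1 / Dp a (\<gamma> s)) has_real_derivative - (?D' * e * e)) (at t)"
    using DERIV_inverse_fun[OF Dp_curve_deriv[OF t refl] D] D
    by (simp add: e_def divide_inverse power2_eq_square mult.assoc)
  have d2: "((\<lambda>s. (1 / Dp a (\<gamma> s)) * (1 / Dp a (\<gamma> s))) has_real_derivative - 2 * ?D' * e * e * e) (at t)"
    using DERIV_mult[OF dinv dinv] by (simp add: e_def algebra_simps)
  have d3: "((\<lambda>s. U s $ 3 * V s $ 3) has_real_derivative
     deriv (\<lambda>s. U s $ 3) t * V t $ 3 + U t $ 3 * deriv (\<lambda>s. V s $ 3) t) (at t)"
    using DERIV_mult[OF dU[of 3] dV[of 3]] by (simp add: mult.commute)
  note d4 = DERIV_add[OF DERIV_mult[OF d1 d2] d3]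
  have gi: "\<And>p u v. ginner (bcv_metric a) p u v = (u$1 * v$1 + u$2 * v$2) * ((1 / Dp a p) * (1 / Dp a p)) + u$3 * v$3"
    by (simp add: ginner_bcv hh_def power2_eq_square)
  have G: "\<And>k i j. christoffel (bcv_metric a) (\<gamma> t) k i j = -2 * a * e * Lf (\<gamma> t) k i j"
    using D by (simp add: christ Gam_def e_def)
  show ?thesis
    unfolding gi
    apply (rule deriv_eqI[OF d4])
    unfolding e_def[symmetric]
    apply (simp add: covd_def G sum_3 Lf_def ec_def vel_def)
    apply (simp add: algebra_simps)
    done
qed

end

lemma const_deriv0:
  assumes "open I" "t \<in> I" "\<forall>s\<in>I. f s = c" "(f has_real_derivative X) (at t)"
  shows "X = 0"
proof -
  have "(f has_real_derivative 0) (at t)"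
    by (rule has_field_derivative_transform_within_open[OF DERIV_const assms(1,2)]) (use assms(3) in simp)
  then show ?thesis using assms(4) DERIV_unique by blast
qed

lemma agree_deriv:
  assumes "open I" "t \<in> I" "\<forall>s\<in>I. f s = g s" "(f has_real_derivative X) (at t)" "(g has_real_derivative Y) (at t)"
  shows "X = Y"
proof -
  have "(g has_real_derivative X) (at t)"
    by (rule has_field_derivative_transform_within_open[OF assms(4) assms(1,2)]) (use assms(3) in simp)
  then show ?thesis using assms(5) DERIV_unique by blast
qed

lemma zero_deriv_const:
  fixes f :: "real \<Rightarrow> real"
  assumes "open I" "connected I" "\<forall>t\<in>I. (f has_real_derivative 0) (at t)" "t0 \<in> I"
  shows "\<forall>t\<in>I. f t = f t0"
proof -
  have "continuous_on I f"
    using assms(3) by (meson DERIV_isCont continuous_at_imp_continuous_on)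
  then obtain c where "\<And>x. x \<in> I \<Longrightarrow> f x = c"
    using DERIV_zero_connected_constant[of I "{}" f] assms by auto
  then show ?thesis using assms(4) by auto
qed

lemma orth4:
  fixes u v w x :: "real^3"
  assumes "u \<noteq> 0" "v \<noteq> 0" "w \<noteq> 0" "u \<bullet> v = 0" "u \<bullet> w = 0" "v \<bullet> w = 0"
    "x \<bullet> u = 0" "x \<bullet> v = 0" "x \<bullet> w = 0"
  shows "x = 0"
proof (rule ccontr)
  assume x: "x \<noteq> 0"
  let ?S = "{u, v, w, x}"
  have uu: "u \<bullet> u \<noteq> 0" "v \<bullet> v \<noteq> 0" "w \<bullet> w \<noteq> 0" "x \<bullet> x \<noteq> 0" using assms x by auto
  have d: "u \<noteq> v" "u \<noteq> w" "u \<noteq> x" "v \<noteq> w" "v \<noteq> x" "w \<noteq> x"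
    using uu assms by (metis inner_commute)+
  have po: "pairwise orthogonal ?S"
    unfolding pairwise_def orthogonal_def using assms by (auto simp: inner_commute)
  have "0 \<notin> ?S" using assms x by auto
  then have "independent ?S" using pairwise_orthogonal_independent[OF po] by blast
  then have "card ?S \<le> 3" using independent_bound[of ?S] by simp
  moreover have "card ?S = 4" using d by simp
  ultimately show False by simp
qed

definition Sm :: "real \<Rightarrow> real^3 \<Rightarrow> real^3 \<Rightarrow> real^3" where
  "Sm a p v = (\<chi> i. if i = 3 then v $ i else v $ i / Dp a p)"

lemma ginner_Sm: "ginner (bcv_metric a) p u v = Sm a p u \<bullet> Sm a p v"
  by (simp add: ginner_bcv hh_def Sm_def inner_vec_def sum_3 power2_eq_square add_divide_distrib)

lemma Sm_zero: "Dp a p \<noteq> 0 \<Longrightarrow> Sm a p v = 0 \<longleftrightarrow> v = 0"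
  by (auto simp: Sm_def vec_eq_iff forall_3)

lemma g_orth:
  assumes D: "Dp a p \<noteq> 0" and "u \<noteq> 0" "v \<noteq> 0" "w \<noteq> 0"
    "ginner (bcv_metric a) p u v = 0" "ginner (bcv_metric a) p u w = 0" "ginner (bcv_metric a) p v w = 0"
    "ginner (bcv_metric a) p x u = 0" "ginner (bcv_metric a) p x v = 0" "ginner (bcv_metric a) p x w = 0"
  shows "x = 0"
  using orth4[of "Sm a p u" "Sm a p v" "Sm a p w" "Sm a p x"] assms
  by (simp add: ginner_Sm Sm_zero)

lemma ginner_nn: "ginner (bcv_metric a) p u u \<ge> 0"
  by (simp add: ginner_Sm)

lemma ginner_zero: "Dp a p \<noteq> 0 \<Longrightarrow> ginner (bcv_metric a) p u u = 0 \<Longrightarrow> u = 0"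
  by (simp add: ginner_Sm Sm_zero)

lemma ginner_sym: "ginner (bcv_metric a) p u v = ginner (bcv_metric a) p v u"
  by (simp add: ginner_Sm inner_commute)

lemma Sm_lin: "Sm a p (x1 *\<^sub>R u1 + x2 *\<^sub>R u2) = x1 *\<^sub>R Sm a p u1 + x2 *\<^sub>R Sm a p u2"
  by (simp add: Sm_def vec_eq_iff add_divide_distrib)

lemma Sm_lin3: "Sm a p (A + B - C) = Sm a p A + Sm a p B - Sm a p C"
  by (simp add: Sm_def vec_eq_iff add_divide_distrib diff_divide_distrib)

lemma ginner_l2: "ginner (bcv_metric a) p (x1 *\<^sub>R u1 + x2 *\<^sub>R u2) v
   = x1 * ginner (bcv_metric a) p u1 v + x2 * ginner (bcv_metric a) p u2 v"
  by (simp add: ginner_Sm Sm_lin inner_add_left)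

lemma ginner_r2: "ginner (bcv_metric a) p v (x1 *\<^sub>R u1 + x2 *\<^sub>R u2)
   = x1 * ginner (bcv_metric a) p v u1 + x2 * ginner (bcv_metric a) p v u2"
  by (simp add: ginner_Sm Sm_lin inner_add_right)

lemma ginner_l3: "ginner (bcv_metric a) p (A + B - C) W
   = ginner (bcv_metric a) p A W + ginner (bcv_metric a) p B W - ginner (bcv_metric a) p C W"
  by (simp add: ginner_Sm Sm_lin3 inner_add_left inner_diff_left)

lemma hh_nn: "hh a p u u \<ge> 0"
  unfolding hh_def by (intro divide_nonneg_nonneg add_nonneg_nonneg) auto

lemma ginner_l1: "ginner (bcv_metric a) p (u + x *\<^sub>R v) w = ginner (bcv_metric a) p u w + x * ginner (bcv_metric a) p v w"
  using ginner_l2[of a p 1 u x v w] by simp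

lemma ginner_r1: "ginner (bcv_metric a) p w (u + x *\<^sub>R v) = ginner (bcv_metric a) p w u + x * ginner (bcv_metric a) p w v"
  using ginner_r2[of a p w 1 u x v] by simp

theorem corollary4p10:
  fixes a :: real and \<gamma> :: "real \<Rightarrow> real^3" and I :: "real set"
  assumes "a < 0"
    and "open I" and "connected I" and "I \<noteq> {}"
    and "smooth_curve_on \<gamma> I"
    and "\<forall>t\<in>I. \<gamma> t \<in> bcv_domain a"
    and "arclength_param (bcv_metric a) \<gamma> I"
    and "\<exists>c. \<forall>t\<in>I. curvature (bcv_metric a) \<gamma> t = c"
    and "triharmonic (bcv_metric a) \<gamma> I"
  shows "geodesic_on (bcv_metric a) \<gamma> I"
proof -
  have Dpos: "\<forall>t\<in>I. Dp a (\<gamma> t) > 0" using assms(6) by (simp add: bcv_domain_def Dp_def)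
  have Dne: "\<And>t. t \<in> I \<Longrightarrow> Dp a (\<gamma> t) \<noteq> 0" using Dpos by force
  interpret curvctx a \<gamma> I using assms(2) assms(5) Dpos by unfold_locales auto
  have opI: "open I" by (rule assms(2))
  define T where "T = covd_pow (bcv_metric a) \<gamma>"
  define p where "p = (\<lambda>i j t. ginner (bcv_metric a) (\<gamma> t) (T i t) (T j t))"
  define f where "f = (\<lambda>i t. T i t $ 3)"
  have TS: "\<And>i. covd (bcv_metric a) \<gamma> (T i) = T (Suc i)" by (simp add: T_def covd_pow_Suc)
  have T0: "\<And>t. T 0 t = vel \<gamma> t" by (simp add: T_def covd_pow_def)
  have TA: "\<And>i k. (\<lambda>s. T i s $ k) \<in> Alg a \<gamma> I" unfolding T_def by (rule covd_pow_Alg)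
  have pd: "\<And>i j t. t \<in> I \<Longrightarrow> (p i j has_real_derivative p (i + 1) j t + p i (j + 1) t) (at t)"
  proof -
    fix i j t assume t: "t \<in> I"
    show "(p i j has_real_derivative p (i + 1) j t + p i (j + 1) t) (at t)"
      using ginner_deriv[OF t TA TA, of i j] unfolding p_def TS by simp
  qed
  have pg: "\<And>i j t. ginner (bcv_metric a) (\<gamma> t) (T i t) (T j t) = p i j t" by (simp add: p_def)
  have psym: "\<And>i j t. p i j t = p j i t" by (simp add: p_def ginner_sym)
  have fd: "\<And>i t. t \<in> I \<Longrightarrow> (f i has_real_derivative f (i + 1) t) (at t)"
  proof -
    fix i t assume t: "t \<in> I"
    have "f (i + 1) t = deriv (\<lambda>s. T i s $ 3) t"
      unfolding f_def Suc_eq_plus1[symmetric] TS[symmetric] by (rule covd3[OF t])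
    then show "(f i has_real_derivative f (i + 1) t) (at t)"
      using Alg_has_deriv[OF TA t, of i 3] by (simp add: f_def)
  qed
  have hhp: "\<And>i j t. hh a (\<gamma> t) (T i t) (T j t) = p i j t - f i t * f j t"
    by (simp add: p_def f_def ginner_bcv)
  have hhnn: "\<And>i t. hh a (\<gamma> t) (T i t) (T i t) \<ge> 0" by (rule hh_nn)
  have pnn: "\<And>i t. p i i t \<ge> 0" by (simp add: p_def ginner_nn)
  have tri: "\<And>t. t \<in> I \<Longrightarrow> T 5 t + riem (bcv_metric a) (\<gamma> t) (T 3 t) (T 0 t) (T 0 t)
      - riem (bcv_metric a) (\<gamma> t) (T 2 t) (T 1 t) (T 0 t) = 0"
    using assms(9) unfolding triharmonic_def T0 by (simp add: T_def)
  have p00: "\<forall>t\<in>I. p 0 0 t = 1"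
    using assms(7) unfolding arclength_param_def gnorm_def by (simp add: p_def T0)
  obtain c where c: "\<forall>t\<in>I. curvature (bcv_metric a) \<gamma> t = c" using assms(8) by blast
  define K where "K = c\<^sup>2"
  have p11: "\<forall>t\<in>I. p 1 1 t = K"
  proof
    fix t assume t: "t \<in> I"
    have "sqrt (p 1 1 t) = c" using c t unfolding curvature_def gnorm_def by (simp add: p_def T_def)
    then show "p 1 1 t = K" unfolding K_def using pnn[of 1 t] by auto
  qed
  have K0: "K = 0"
  proof (rule ccontr)
    assume "K \<noteq> 0"
    then have Kpos: "K > 0" unfolding K_def by simp
    obtain t0 where t0: "t0 \<in> I" using assms(4) by blast
    have a1: "\<forall>t\<in>I. p 0 1 t = 0"
    proof
      fix t assume t: "t \<in> I"
      have "p 1 0 t + p 0 1 t = 0" using const_deriv0[OF opI t p00 pd[OF t]] by (simp add: eval_nat_numeral)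
      then show "p 0 1 t = 0" using psym[of 1 0 t] by simp
    qed
    have a2: "\<forall>t\<in>I. p 1 2 t = 0"
    proof
      fix t assume t: "t \<in> I"
      have "p 2 1 t + p 1 2 t = 0" using const_deriv0[OF opI t p11 pd[OF t]] by (simp add: eval_nat_numeral)
      then show "p 1 2 t = 0" using psym[of 2 1 t] by simp
    qed
    have a3: "\<forall>t\<in>I. p 0 2 t = - K"
    proof
      fix t assume t: "t \<in> I"
      have "p 1 1 t + p 0 2 t = 0" using const_deriv0[OF opI t a1 pd[OF t]] by (simp add: eval_nat_numeral)
      then show "p 0 2 t = - K" using p11 t by simp
    qed
    have a4: "\<forall>t\<in>I. p 1 3 t = - p 2 2 t"
    proof
      fix t assume t: "t \<in> I"
      have "p 2 2 t + p 1 3 t = 0" using const_deriv0[OF opI t a2 pd[OF t]] by (simp add: eval_nat_numeral)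
      then show "p 1 3 t = - p 2 2 t" by simp
    qed
    have a5: "\<forall>t\<in>I. p 0 3 t = 0"
    proof
      fix t assume t: "t \<in> I"
      have "p 1 2 t + p 0 3 t = 0" using const_deriv0[OF opI t a3 pd[OF t]] by (simp add: eval_nat_numeral)
      then show "p 0 3 t = 0" using a2 t by simp
    qed
    have a6: "\<forall>t\<in>I. p 0 4 t = p 2 2 t"
    proof
      fix t assume t: "t \<in> I"
      have "p 1 3 t + p 0 4 t = 0" using const_deriv0[OF opI t a5 pd[OF t]] by (simp add: eval_nat_numeral)
      then show "p 0 4 t = p 2 2 t" using a4 t by simp
    qed
    have a7: "\<forall>t\<in>I. p 1 4 t = -3 * p 2 3 t"
    proof
      fix t assume t: "t \<in> I"
      have "p 2 3 t + p 1 4 t = - (p 3 2 t + p 2 3 t)"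
        using agree_deriv[OF opI t a4 pd[OF t] DERIV_minus[OF pd[OF t]]] by (simp add: eval_nat_numeral)
      then show "p 1 4 t = -3 * p 2 3 t" using psym[of 3 2 t] by simp
    qed
    have a8: "\<forall>t\<in>I. p 0 5 t = 5 * p 2 3 t"
    proof
      fix t assume t: "t \<in> I"
      have "p 1 4 t + p 0 5 t = p 3 2 t + p 2 3 t"
        using agree_deriv[OF opI t a6 pd[OF t] pd[OF t]] by (simp add: eval_nat_numeral)
      then show "p 0 5 t = 5 * p 2 3 t" using psym[of 3 2 t] a7 t by simp
    qed
    have a9: "\<forall>t\<in>I. p 2 3 t = 0"
    proof
      fix t assume t: "t \<in> I"
      have "ginner (bcv_metric a) (\<gamma> t) (T 5 t + riem (bcv_metric a) (\<gamma> t) (T 3 t) (T 0 t) (T 0 t)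
         - riem (bcv_metric a) (\<gamma> t) (T 2 t) (T 1 t) (T 0 t)) (T 0 t) = 0"
        using tri[OF t] by (simp add: ginner_bcv hh_def)
      then have "p 5 0 t = 0"
        unfolding ginner_l3 ginner_riem[OF Dpos[rule_format, OF t]] by (simp add: p_def algebra_simps)
      then show "p 2 3 t = 0" using a8 t psym[of 5 0 t] by simp
    qed
    define M where "M = p 2 2 t0"
    have p22: "\<forall>t\<in>I. p 2 2 t = M"
    proof -
      have "\<forall>t\<in>I. (p 2 2 has_real_derivative 0) (at t)"
      proof
        fix t assume t: "t \<in> I"
        show "(p 2 2 has_real_derivative 0) (at t)" using pd[OF t, of 2 2] a9 t psym[of 3 2 t] by simp
      qed
      then show ?thesis unfolding M_def by (rule zero_deriv_const[OF opI assms(3) _ t0])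
    qed
    have a11: "\<forall>t\<in>I. p 2 4 t = - p 3 3 t"
    proof
      fix t assume t: "t \<in> I"
      have "p 3 3 t + p 2 4 t = 0" using const_deriv0[OF opI t a9 pd[OF t]] by (simp add: eval_nat_numeral)
      then show "p 2 4 t = - p 3 3 t" by simp
    qed
    have a12: "\<forall>t\<in>I. p 1 5 t = p 3 3 t"
    proof
      fix t assume t: "t \<in> I"
      have a7': "\<forall>t\<in>I. p 1 4 t = 0" using a7 a9 by simp
      have "p 2 4 t + p 1 5 t = 0" using const_deriv0[OF opI t a7' pd[OF t]] by (simp add: eval_nat_numeral)
      then show "p 1 5 t = p 3 3 t" using a11 t by simp
    qed
    define P where "P = (\<lambda>t. T 2 t + K *\<^sub>R T 0 t)"
    have PP: "\<forall>t\<in>I. ginner (bcv_metric a) (\<gamma> t) (P t) (P t) = M - K\<^sup>2"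
    proof
      fix t assume t: "t \<in> I"
      show "ginner (bcv_metric a) (\<gamma> t) (P t) (P t) = M - K\<^sup>2"
        using p00 a3 p22 psym[of 2 0 t] t
        unfolding P_def ginner_l1 ginner_r1 pg by (simp add: power2_eq_square algebra_simps)
    qed
    have MK: "M \<ge> K\<^sup>2" using PP t0 ginner_nn[of a "\<gamma> t0" "P t0"] by simp
    have "K\<^sup>2 > 0" using Kpos by simp
    then have Mpos: "M > 0" using MK by linarith
    define \<mu> where "\<mu> = M / K"
    have mupos: "\<mu> > 0" unfolding \<mu>_def using Mpos Kpos by simp
    define Q where "Q = (\<lambda>t. T 3 t + \<mu> *\<^sub>R T 1 t)"
    have QQ: "\<forall>t\<in>I. ginner (bcv_metric a) (\<gamma> t) (Q t) (Q t) = p 3 3 t - M\<^sup>2 / K"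
    proof
      fix t assume t: "t \<in> I"
      have "ginner (bcv_metric a) (\<gamma> t) (Q t) (Q t) = p 3 3 t + 2 * \<mu> * p 1 3 t + \<mu> * \<mu> * p 1 1 t"
        using psym[of 3 1 t] unfolding Q_def ginner_l1 ginner_r1 pg by (simp add: algebra_simps)
      also have "\<dots> = p 3 3 t - M\<^sup>2 / K"
        using a4 p22 p11 t Kpos unfolding \<mu>_def by (simp add: field_simps power2_eq_square)
      finally show "ginner (bcv_metric a) (\<gamma> t) (Q t) (Q t) = p 3 3 t - M\<^sup>2 / K" .
    qed
    have Q0: "\<forall>t\<in>I. Q t = 0"
    proof
      fix t assume t: "t \<in> I"
      show "Q t = 0"
      proof (cases "M = K\<^sup>2")
        case True
        have "P t = 0" using PP t True ginner_zero[OF Dne[OF t]] by simp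
        then have "ginner (bcv_metric a) (\<gamma> t) (P t) (T 4 t) = 0" by (simp add: ginner_bcv hh_def)
        then have "p 2 4 t + K * p 0 4 t = 0" by (simp add: P_def ginner_l1 p_def)
        then have "p 3 3 t = K * M" using a11 a6 p22 t by simp
        then have "ginner (bcv_metric a) (\<gamma> t) (Q t) (Q t) = 0"
          using QQ t True Kpos by (simp add: power2_eq_square)
        then show ?thesis using ginner_zero[OF Dne[OF t]] by blast
      next
        case False
        then have MK': "M - K\<^sup>2 \<noteq> 0" by simp
        have g: "\<And>u. ginner (bcv_metric a) (\<gamma> t) u u \<noteq> 0 \<Longrightarrow> u \<noteq> 0"
          by (auto simp: ginner_bcv hh_def)
        show ?thesis
        proof (rule g_orth[OF Dne[OF t], of "T 0 t" "T 1 t" "P t"])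
          show "T 0 t \<noteq> 0" by (rule g) (use p00 t in \<open>simp add: p_def\<close>)
          show "T 1 t \<noteq> 0" by (rule g) (use p11 t Kpos in \<open>simp add: p_def\<close>)
          show "P t \<noteq> 0" by (rule g) (use PP t MK' in simp)
          have z: "p 0 1 t = 0" "p 1 0 t = 0" "p 2 0 t = - K" "p 0 2 t = - K" "p 0 0 t = 1"
            "p 1 2 t = 0" "p 2 1 t = 0" "p 0 3 t = 0" "p 3 0 t = 0" "p 1 3 t = - M" "p 3 1 t = - M"
            "p 1 1 t = K" "p 2 3 t = 0" "p 3 2 t = 0"
            using a1 a2 a3 a4 a5 a9 p00 p11 p22 t psym[of 1 0 t] psym[of 2 0 t] psym[of 2 1 t]
              psym[of 3 0 t] psym[of 3 1 t] psym[of 3 2 t] by auto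
          show "ginner (bcv_metric a) (\<gamma> t) (T 0 t) (T 1 t) = 0" using z by (simp add: pg)
          show "ginner (bcv_metric a) (\<gamma> t) (T 0 t) (P t) = 0"
            unfolding P_def ginner_r1 pg z by simp
          show "ginner (bcv_metric a) (\<gamma> t) (T 1 t) (P t) = 0"
            unfolding P_def ginner_r1 pg z by simp
          show "ginner (bcv_metric a) (\<gamma> t) (Q t) (T 0 t) = 0"
            unfolding Q_def ginner_l1 pg z by simp
          show "ginner (bcv_metric a) (\<gamma> t) (Q t) (T 1 t) = 0"
            unfolding Q_def ginner_l1 pg z using Kpos by (simp add: \<mu>_def)
          show "ginner (bcv_metric a) (\<gamma> t) (Q t) (P t) = 0"
            unfolding Q_def P_def ginner_l1 ginner_r1 pg z by simp
        qed
      qed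
    qed
    have p33: "\<forall>t\<in>I. p 3 3 t = M\<^sup>2 / K"
      using QQ Q0 by (simp add: ginner_bcv hh_def)
    have b1: "\<forall>t\<in>I. f 3 t = - \<mu> * f 1 t"
    proof
      fix t assume t: "t \<in> I"
      have "Q t $ 3 = 0" using Q0 t by simp
      then show "f 3 t = - \<mu> * f 1 t" by (simp add: Q_def f_def)
    qed
    have b2: "\<forall>t\<in>I. f 4 t = - \<mu> * f 2 t"
    proof
      fix t assume t: "t \<in> I"
      show "f 4 t = - \<mu> * f 2 t"
        using agree_deriv[OF opI t b1 fd[OF t] DERIV_cmult[OF fd[OF t]]] by (simp add: eval_nat_numeral)
    qed
    have b3: "\<forall>t\<in>I. f 5 t = - \<mu> * f 3 t"
    proof
      fix t assume t: "t \<in> I"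
      show "f 5 t = - \<mu> * f 3 t"
        using agree_deriv[OF opI t b2 fd[OF t] DERIV_cmult[OF fd[OF t]]] by (simp add: eval_nat_numeral)
    qed
    have b4: "\<forall>t\<in>I. f 5 t = 0"
    proof
      fix t assume t: "t \<in> I"
      have "(T 5 t + riem (bcv_metric a) (\<gamma> t) (T 3 t) (T 0 t) (T 0 t)
         - riem (bcv_metric a) (\<gamma> t) (T 2 t) (T 1 t) (T 0 t)) $ 3 = 0"
        using tri[OF t] by simp
      then show "f 5 t = 0" using riem3[OF Dpos[rule_format, OF t]] by (simp add: f_def)
    qed
    have b5: "\<forall>t\<in>I. f 1 t = 0"
    proof
      fix t assume t: "t \<in> I"
      have e1: "f 5 t = - \<mu> * f 3 t" "f 3 t = - \<mu> * f 1 t" "f 5 t = 0" using b1 b3 b4 t by blast+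
      have "0 = - \<mu> * f 3 t" using e1(1) e1(3) by simp
      also have "\<dots> = \<mu> * (\<mu> * f 1 t)" using e1(2) by simp
      finally have "\<mu> * (\<mu> * f 1 t) = 0" by simp
      then show "f 1 t = 0" using mupos by simp
    qed
    have b6: "\<forall>t\<in>I. f 2 t = 0"
    proof
      fix t assume t: "t \<in> I"
      show "f 2 t = 0" using const_deriv0[OF opI t b5 fd[OF t]] by (simp add: eval_nat_numeral)
    qed
    have "ginner (bcv_metric a) (\<gamma> t0) (T 5 t0 + riem (bcv_metric a) (\<gamma> t0) (T 3 t0) (T 0 t0) (T 0 t0)
         - riem (bcv_metric a) (\<gamma> t0) (T 2 t0) (T 1 t0) (T 0 t0)) (T 1 t0) = 0"
      using tri[OF t0] by (simp add: ginner_bcv hh_def)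
    then have E: "p 5 1 t0 + 4 * a * (hh a (\<gamma> t0) (T 3 t0) (T 1 t0) * hh a (\<gamma> t0) (T 0 t0) (T 0 t0)
        - hh a (\<gamma> t0) (T 0 t0) (T 1 t0) * hh a (\<gamma> t0) (T 3 t0) (T 0 t0))
        - 4 * a * (hh a (\<gamma> t0) (T 2 t0) (T 1 t0) * hh a (\<gamma> t0) (T 1 t0) (T 0 t0)
        - hh a (\<gamma> t0) (T 1 t0) (T 1 t0) * hh a (\<gamma> t0) (T 2 t0) (T 0 t0)) = 0"
      unfolding ginner_l3 ginner_riem[OF Dpos[rule_format, OF t0]] by (simp add: p_def)
    have h31: "hh a (\<gamma> t0) (T 3 t0) (T 1 t0) = - M" using hhp[where i=3 and j=1 and t=t0] psym[of 3 1 t0] a4 p22 b5 t0 by simp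
    have h01: "hh a (\<gamma> t0) (T 0 t0) (T 1 t0) = 0" using hhp[where i=0 and j=1 and t=t0] a1 b5 t0 by simp
    have h21: "hh a (\<gamma> t0) (T 2 t0) (T 1 t0) = 0" using hhp[where i=2 and j=1 and t=t0] psym[of 2 1 t0] a2 b5 t0 by simp
    have h11: "hh a (\<gamma> t0) (T 1 t0) (T 1 t0) = K" using hhp[where i=1 and j=1 and t=t0] p11 b5 t0 by simp
    have h20: "hh a (\<gamma> t0) (T 2 t0) (T 0 t0) = - K" using hhp[where i=2 and j=0 and t=t0] psym[of 2 0 t0] a3 b6 t0 by simp
    have p51: "p 5 1 t0 = M\<^sup>2 / K" using psym[of 5 1 t0] a12 p33 t0 by simp
    define h where "h = hh a (\<gamma> t0) (T 0 t0) (T 0 t0)"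
    have h: "h \<ge> 0" unfolding h_def by (rule hhnn)
    have E2: "M\<^sup>2 / K - 4 * a * M * h + 4 * a * K * K * (-1) = 0"
      using E unfolding h31 h01 h21 h11 h20 p51 h_def[symmetric] by (simp add: algebra_simps)
    have "M\<^sup>2 / K > 0" using Mpos Kpos by simp
    moreover have "- 4 * a * M * h \<ge> 0" using assms(1) Mpos h by (simp add: mult_nonneg_nonneg mult_nonpos_nonneg)
    moreover have "- 4 * a * K * K > 0" using assms(1) Kpos by (simp add: mult_neg_pos)
    ultimately show False using E2 by linarith
  qed
  show ?thesis
    unfolding geodesic_on_def
  proof
    fix t assume t: "t \<in> I"
    have "ginner (bcv_metric a) (\<gamma> t) (T 1 t) (T 1 t) = 0" using p11 K0 t by (simp add: p_def)
    then have "T 1 t = 0" by (rule ginner_zero[OF Dne[OF t]])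
    then show "covd_pow (bcv_metric a) \<gamma> 1 t = 0" by (simp add: T_def)
  qed
qed

end
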